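(* Let $\mathcal{D}_n$ be a minimal DFA of a bifix-free language with state set $Q=\{0,\dots,n-1\}$ (initial state $0$, final state $n-2$, empty state $n-1$) and transition semigroup $T(n)$. Let $t,\hat{t}\in T(n)$ and $s\in\mathbf{W}^{\ge 6}_{\mathrm{bf}}(n)$. Suppose that: (1) all states $q\in Q_M$ with $qt\ne qs$ belong to $C$, where $C$ is either an orbit of $s$ or the tree of a state in $s$; (2) all states $q\in Q_M$ with $q\hat{t}\ne qs$ belong to $\hat{C}$, where $\hat{C}$ is either an orbit of $s$ or the tree of a state in $s$; (3) for some $i,j\ge 0$ the transformation $s^it^j$ focuses a colliding pair both of whose states lie in $C$. Then $C\subseteq\hat{C}$ or $\hat{C}\subseteq C$. In particular, if $C$ and $\hat{C}$ are both orbits, or both trees rooted in a state mapped by $s$ to $n-1$, then $C=\hat{C}$.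
   Context: A language is bifix-free if no word of it is a proper prefix or a proper suffix of another word of it. Transformations of $Q$ act on the right, $q(st)=(qs)t$; $T(n)$ is the semigroup of transformations induced by nonempty words. $Q_M=\{1,\dots,n-3\}$. An unordered pair $\{p,q\}$ of distinct states of $Q_M$ is colliding if there is $u\in T(n)$ with $0u=p$ and $ru=q$ for some $r\in Q_M$. A transformation $u$ focuses a pair $\{p,q\}$ if $pu=qu=r$ for a single state $r\in Q_M\cup\{n-2\}$. The underlying digraph of a transformation $s$ has vertex set $Q$ and edges $(q,qs)$; the orbit of $q$ in $s$ is its connected component, $\{p\in Q\mid ps^i=qs^j$ for some $i,j\ge0\}$; a cycle is a cycle of length at least 2 in this digraph; if $q$ does not lie in a cycle, the tree of $q$ is the underlying digraph restricted to the states $p$ having a path from $p$ to $q$. Let $\mathbf{B}_{\mathrm{bf}}(n)$ be the set of all transformations $t$ of $Q$ with $0\notin Qt$, $(n-1)t=n-1$, $(n-2)t=n-1$, and for all $j\ge1$, either $0t^j=n-1$ or $0t^j\ne qt^j$ for all $0<q<n-1$; and $\mathbf{W}^{\ge 6}_{\mathrm{bf}}(n)=\{t\in\mathbf{B}_{\mathrm{bf}}(n)\mid 0t\in\{n-2,n-1\}$, or $0t\in Q_M$ and $qt\in\{n-2,n-1\}$ for all $q\in Q_M\}$. *)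

theory Defs
  imports Main "HOL-Library.Sublist"
begin

(* States are 0..n-1; delta is the transition function, Sigma the alphabet.
   Transformations act on the right: q(uv) = (qu)v. *)

definition dstar :: "(nat \<Rightarrow> 'a \<Rightarrow> nat) \<Rightarrow> nat \<Rightarrow> 'a list \<Rightarrow> nat" where
  "dstar \<delta> q w = foldl \<delta> q w"

definition lang :: "nat \<Rightarrow> 'a set \<Rightarrow> (nat \<Rightarrow> 'a \<Rightarrow> nat) \<Rightarrow> 'a list set" where
  "lang n \<Sigma> \<delta> = {w \<in> lists \<Sigma>. dstar \<delta> 0 w = n - 2}"

definition bifix_free :: "'a list set \<Rightarrow> bool" where
  "bifix_free L \<longleftrightarrow> (\<forall>u\<in>L. \<forall>v\<in>L. \<not> strict_prefix u v \<and> \<not> strict_suffix u v)"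

definition bf_min_dfa :: "nat \<Rightarrow> 'a set \<Rightarrow> (nat \<Rightarrow> 'a \<Rightarrow> nat) \<Rightarrow> bool" where
  "bf_min_dfa n \<Sigma> \<delta> \<longleftrightarrow>
     finite \<Sigma> \<and> n \<ge> 2 \<and>
     (\<forall>q<n. \<forall>a\<in>\<Sigma>. \<delta> q a < n) \<and>
     (\<forall>w\<in>lists \<Sigma>. dstar \<delta> (n - 1) w \<noteq> n - 2) \<and>
     (\<forall>q<n. \<exists>w\<in>lists \<Sigma>. dstar \<delta> 0 w = q) \<and>
     (\<forall>p<n. \<forall>q<n. p \<noteq> q \<longrightarrow>
        (\<exists>w\<in>lists \<Sigma>. (dstar \<delta> p w = n - 2) \<noteq> (dstar \<delta> q w = n - 2))) \<and>
     bifix_free (lang n \<Sigma> \<delta>)"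

definition trans_of :: "nat \<Rightarrow> (nat \<Rightarrow> 'a \<Rightarrow> nat) \<Rightarrow> 'a list \<Rightarrow> nat \<Rightarrow> nat" where
  "trans_of n \<delta> w = (\<lambda>q. if q < n then dstar \<delta> q w else q)"

definition Tsg :: "nat \<Rightarrow> 'a set \<Rightarrow> (nat \<Rightarrow> 'a \<Rightarrow> nat) \<Rightarrow> (nat \<Rightarrow> nat) set" where
  "Tsg n \<Sigma> \<delta> = {trans_of n \<delta> w | w. w \<in> lists \<Sigma> \<and> w \<noteq> []}"

definition QM :: "nat \<Rightarrow> nat set" where
  "QM n = {1..n-3}"

definition colliding :: "nat \<Rightarrow> 'a set \<Rightarrow> (nat \<Rightarrow> 'a \<Rightarrow> nat) \<Rightarrow> nat \<Rightarrow> nat \<Rightarrow> bool" where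
  "colliding n \<Sigma> \<delta> p q \<longleftrightarrow> p \<noteq> q \<and> p \<in> QM n \<and> q \<in> QM n \<and>
     (\<exists>u\<in>Tsg n \<Sigma> \<delta>. \<exists>r\<in>QM n. (u 0 = p \<and> u r = q) \<or> (u 0 = q \<and> u r = p))"

definition focuses :: "nat \<Rightarrow> (nat \<Rightarrow> nat) \<Rightarrow> nat \<Rightarrow> nat \<Rightarrow> bool" where
  "focuses n u p q \<longleftrightarrow> (\<exists>r \<in> QM n \<union> {n - 2}. u p = r \<and> u q = r)"

definition Bbf :: "nat \<Rightarrow> (nat \<Rightarrow> nat) set" where
  "Bbf n = {t. (\<forall>q<n. t q < n) \<and> (\<forall>q<n. t q \<noteq> 0) \<and> t (n - 1) = n - 1 \<and> t (n - 2) = n - 1 \<and>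
     (\<forall>j\<ge>1. (t ^^ j) 0 = n - 1 \<or> (\<forall>q. 0 < q \<and> q < n - 1 \<longrightarrow> (t ^^ j) 0 \<noteq> (t ^^ j) q))}"

definition Wbf6 :: "nat \<Rightarrow> (nat \<Rightarrow> nat) set" where
  "Wbf6 n = {t \<in> Bbf n. t 0 \<in> {n - 2, n - 1} \<or>
                         (t 0 \<in> QM n \<and> (\<forall>q\<in>QM n. t q \<in> {n - 2, n - 1}))}"

definition orbit :: "nat \<Rightarrow> (nat \<Rightarrow> nat) \<Rightarrow> nat \<Rightarrow> nat set" where
  "orbit n s q = {p. p < n \<and> (\<exists>i j. (s ^^ i) p = (s ^^ j) q)}"

definition in_cycle :: "(nat \<Rightarrow> nat) \<Rightarrow> nat \<Rightarrow> bool" where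
  "in_cycle s q \<longleftrightarrow> s q \<noteq> q \<and> (\<exists>k>0. (s ^^ k) q = q)"

definition tree :: "nat \<Rightarrow> (nat \<Rightarrow> nat) \<Rightarrow> nat \<Rightarrow> nat set" where
  "tree n s q = {p. p < n \<and> (\<exists>i. (s ^^ i) p = q)}"

definition is_orbit :: "nat \<Rightarrow> (nat \<Rightarrow> nat) \<Rightarrow> nat set \<Rightarrow> bool" where
  "is_orbit n s C \<longleftrightarrow> (\<exists>q<n. C = orbit n s q)"

definition is_tree :: "nat \<Rightarrow> (nat \<Rightarrow> nat) \<Rightarrow> nat set \<Rightarrow> bool" where
  "is_tree n s C \<longleftrightarrow> (\<exists>q<n. \<not> in_cycle s q \<and> C = tree n s q)"

definition is_tree_to_empty :: "nat \<Rightarrow> (nat \<Rightarrow> nat) \<Rightarrow> nat set \<Rightarrow> bool" where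
  "is_tree_to_empty n s C \<longleftrightarrow>
     (\<exists>q<n. q \<noteq> n - 1 \<and> s q = n - 1 \<and> \<not> in_cycle s q \<and> C = tree n s q)"

end

theory Submission
  imports Defs
begin

lemma R_trans:
  fixes f :: "nat \<Rightarrow> nat"
  assumes "(f^^a) x = (f^^b) y" "(f^^c) y = (f^^d) z"
  shows "\<exists>i j. (f^^i) x = (f^^j) z"
proof -
  have "(f^^(c+a)) x = (f^^c) ((f^^a) x)" by (simp add: funpow_add)
  also have "\<dots> = (f^^c) ((f^^b) y)" using assms(1) by simp
  also have "\<dots> = (f^^(c+b)) y" by (simp add: funpow_add)
  also have "\<dots> = (f^^b) ((f^^c) y)" by (simp add: funpow_add add.commute)
  also have "\<dots> = (f^^b) ((f^^d) z)" using assms(2) by simp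
  also have "\<dots> = (f^^(b+d)) z" by (simp add: funpow_add)
  finally show ?thesis by blast
qed

lemma orbit_eq:
  assumes "x \<in> orbit n s q1" "x \<in> orbit n s q2"
  shows "orbit n s q1 = orbit n s q2"
proof -
  have sym: "\<And>a b. (\<exists>i j. (s^^i) a = (s^^j) b) \<Longrightarrow> (\<exists>i j. (s^^i) b = (s^^j) a)" by metis
  have tr: "\<And>a b c. (\<exists>i j. (s^^i) a = (s^^j) b) \<Longrightarrow> (\<exists>i j. (s^^i) b = (s^^j) c)
     \<Longrightarrow> (\<exists>i j. (s^^i) a = (s^^j) c)" using R_trans by metis
  show ?thesis
  proof
    have x1: "\<exists>i j. (s^^i) x = (s^^j) q1" and x2: "\<exists>i j. (s^^i) x = (s^^j) q2"
      using assms unfolding orbit_def by auto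
    show "orbit n s q1 \<subseteq> orbit n s q2"
    proof
      fix y assume "y \<in> orbit n s q1"
      hence "y < n" "\<exists>i j. (s^^i) y = (s^^j) q1" unfolding orbit_def by auto
      moreover have "\<exists>i j. (s^^i) y = (s^^j) q2" using tr[OF tr[OF calculation(2) sym[OF x1]] x2] .
      ultimately show "y \<in> orbit n s q2" unfolding orbit_def by auto
    qed
    show "orbit n s q2 \<subseteq> orbit n s q1"
    proof
      fix y assume "y \<in> orbit n s q2"
      hence "y < n" "\<exists>i j. (s^^i) y = (s^^j) q2" unfolding orbit_def by auto
      moreover have "\<exists>i j. (s^^i) y = (s^^j) q1" using tr[OF tr[OF calculation(2) sym[OF x2]] x1] .
      ultimately show "y \<in> orbit n s q1" unfolding orbit_def by auto
    qed
  qed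
qed

lemma tree_sub_orbit:
  assumes "x \<in> tree n s r" "x \<in> orbit n s q"
  shows "tree n s r \<subseteq> orbit n s q"
proof
  fix y assume "y \<in> tree n s r"
  then obtain a where a: "y < n" "(s^^a) y = r" unfolding tree_def by auto
  obtain b where b: "(s^^b) x = r" using assms(1) unfolding tree_def by auto
  obtain i j where ij: "(s^^i) x = (s^^j) q" using assms(2) unfolding orbit_def by auto
  have "(s^^a) y = (s^^b) x" using a b by simp
  then obtain i' j' where "(s^^i') y = (s^^j') q" using R_trans[OF _ ij] by blast
  thus "y \<in> orbit n s q" using a unfolding orbit_def by auto
qed

lemma tree_tree:
  assumes "x \<in> tree n s r1" "x \<in> tree n s r2"
  shows "tree n s r1 \<subseteq> tree n s r2 \<or> tree n s r2 \<subseteq> tree n s r1"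
proof -
  obtain a where a: "(s^^a) x = r1" using assms(1) unfolding tree_def by auto
  obtain b where b: "(s^^b) x = r2" using assms(2) unfolding tree_def by auto
  have gen: "tree n s r1 \<subseteq> tree n s r2"
    if "(s^^a) x = r1" "(s^^b) x = r2" "a \<le> b" for a b r1 r2
  proof
    have "(s^^((b-a)+a)) x = (s^^(b-a)) ((s^^a) x)" by (simp add: funpow_add)
    hence "(s^^b) x = (s^^(b-a)) ((s^^a) x)" using that(3) by simp
    hence r2: "r2 = (s^^(b-a)) r1" using that by simp
    fix y assume "y \<in> tree n s r1"
    then obtain c where c: "y < n" "(s^^c) y = r1" unfolding tree_def by auto
    have "(s^^(b-a+c)) y = r2" using c r2 by (simp add: funpow_add)
    thus "y \<in> tree n s r2" using c unfolding tree_def by blast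
  qed
  show ?thesis
  proof (cases "a \<le> b")
    case True thus ?thesis using gen[OF a b] by blast
  next
    case False thus ?thesis using gen[OF b a] by simp
  qed
qed

lemma nested:
  assumes "is_orbit n s C \<or> is_tree n s C" "is_orbit n s D \<or> is_tree n s D"
    "x \<in> C" "x \<in> D"
  shows "C \<subseteq> D \<or> D \<subseteq> C"
  using assms unfolding is_orbit_def is_tree_def
  by (metis orbit_eq tree_sub_orbit tree_tree order_refl)

lemma back_closed:
  assumes "is_orbit n s C \<or> is_tree n s C" "y < n" "(s^^k) y \<in> C"
  shows "y \<in> C"
  using assms(1)
proof
  assume "is_orbit n s C"
  then obtain q where C: "C = orbit n s q" unfolding is_orbit_def by auto
  then obtain i j where "(s^^i) ((s^^k) y) = (s^^j) q" using assms(3) unfolding orbit_def by auto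
  hence "(s^^(i+k)) y = (s^^j) q" by (simp add: funpow_add)
  thus ?thesis using C assms(2) unfolding orbit_def by blast
next
  assume "is_tree n s C"
  then obtain q where C: "C = tree n s q" unfolding is_tree_def by auto
  then obtain i where "(s^^i) ((s^^k) y) = q" using assms(3) unfolding tree_def by auto
  hence "(s^^(i+k)) y = q" by (simp add: funpow_add)
  thus ?thesis using C assms(2) unfolding tree_def by blast
qed

lemma dstar_append: "dstar \<delta> q (u@v) = dstar \<delta> (dstar \<delta> q u) v" by (simp add: dstar_def)
lemma dstar_Cons: "dstar \<delta> q (a#w) = dstar \<delta> (\<delta> q a) w" by (simp add: dstar_def)
lemma dstar_Nil: "dstar \<delta> q [] = q" by (simp add: dstar_def)

lemma dstar_lt:
  assumes dfa: "bf_min_dfa n \<Sigma> \<delta>" and "q < n" "w \<in> lists \<Sigma>"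
  shows "dstar \<delta> q w < n"
  using assms(2,3)
proof (induction w arbitrary: q)
  case Nil thus ?case by (simp add: dstar_Nil)
next
  case (Cons a w)
  have "\<delta> q a < n" using dfa Cons.prems unfolding bf_min_dfa_def by auto
  thus ?case using Cons by (simp add: dstar_Cons)
qed

lemma reach_final:
  assumes dfa: "bf_min_dfa n \<Sigma> \<delta>" and "q < n" "q \<noteq> n - 1"
  shows "\<exists>w\<in>lists \<Sigma>. dstar \<delta> q w = n - 2"
proof -
  have n: "n \<ge> 2" "n - 1 < n" using dfa unfolding bf_min_dfa_def by auto
  obtain w where w: "w \<in> lists \<Sigma>" "(dstar \<delta> q w = n - 2) \<noteq> (dstar \<delta> (n-1) w = n - 2)"
    using dfa assms(2,3) n unfolding bf_min_dfa_def by metis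
  have "dstar \<delta> (n-1) w \<noteq> n - 2" using dfa w(1) unfolding bf_min_dfa_def by auto
  thus ?thesis using w by auto
qed

lemma empty_step:
  assumes dfa: "bf_min_dfa n \<Sigma> \<delta>" and a: "a \<in> \<Sigma>"
  shows "\<delta> (n-1) a = n - 1"
proof (rule ccontr)
  assume ne: "\<delta> (n-1) a \<noteq> n - 1"
  have n: "n \<ge> 2" using dfa unfolding bf_min_dfa_def by auto
  have lt: "\<delta> (n-1) a < n" using dfa a n unfolding bf_min_dfa_def by auto
  obtain w where w: "w \<in> lists \<Sigma>" "dstar \<delta> (\<delta> (n-1) a) w = n - 2"
    using reach_final[OF dfa lt ne] by blast
  have "a # w \<in> lists \<Sigma>" using a w by auto
  moreover have "dstar \<delta> (n-1) (a#w) = n - 2" using w by (simp add: dstar_Cons)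
  ultimately show False using dfa unfolding bf_min_dfa_def by blast
qed

lemma empty_fix:
  assumes dfa: "bf_min_dfa n \<Sigma> \<delta>" and "w \<in> lists \<Sigma>"
  shows "dstar \<delta> (n-1) w = n - 1"
  using assms(2)
proof (induction w)
  case Nil thus ?case by (simp add: dstar_Nil)
next
  case (Cons a w)
  have aS: "a \<in> \<Sigma>" using Cons by auto
  have "\<delta> (n-1) a = n - 1" using empty_step[OF dfa aS] .
  thus ?case using Cons by (simp only: dstar_Cons)
qed

lemma final_step:
  assumes dfa: "bf_min_dfa n \<Sigma> \<delta>" and a: "a \<in> \<Sigma>"
  shows "\<delta> (n-2) a = n - 1"
proof (rule ccontr)
  assume ne: "\<delta> (n-2) a \<noteq> n - 1"
  have n: "n \<ge> 2" using dfa unfolding bf_min_dfa_def by auto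
  have lt: "\<delta> (n-2) a < n" using dfa a n unfolding bf_min_dfa_def by auto
  obtain w where w: "w \<in> lists \<Sigma>" "dstar \<delta> (\<delta> (n-2) a) w = n - 2"
    using reach_final[OF dfa lt ne] by blast
  have "n - 2 < n" using n by simp
  then obtain x where x: "x \<in> lists \<Sigma>" "dstar \<delta> 0 x = n - 2"
    using dfa unfolding bf_min_dfa_def by blast
  have L1: "x \<in> lang n \<Sigma> \<delta>" using x unfolding lang_def by auto
  have L2: "x @ a # w \<in> lang n \<Sigma> \<delta>" using x w a unfolding lang_def
    by (simp add: dstar_append dstar_Cons)
  have "strict_prefix x (x @ a # w)" by (simp add: strict_prefix_def)
  thus False using L1 L2 dfa unfolding bf_min_dfa_def bifix_free_def by blast
qed

lemma Tsg_lt: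
  assumes dfa: "bf_min_dfa n \<Sigma> \<delta>" and "u \<in> Tsg n \<Sigma> \<delta>" "q < n"
  shows "u q < n"
proof -
  obtain w where w: "w \<in> lists \<Sigma>" "u = trans_of n \<delta> w"
    using assms(2) unfolding Tsg_def by auto
  show ?thesis using w assms(3) dstar_lt[OF dfa assms(3) w(1)] unfolding trans_of_def by simp
qed

lemma Tsg_empty:
  assumes dfa: "bf_min_dfa n \<Sigma> \<delta>" and "u \<in> Tsg n \<Sigma> \<delta>"
  shows "u (n-1) = n - 1"
proof -
  have n: "n \<ge> 2" using dfa unfolding bf_min_dfa_def by auto
  obtain w where w: "w \<in> lists \<Sigma>" "u = trans_of n \<delta> w"
    using assms(2) unfolding Tsg_def by auto
  have "dstar \<delta> (n-1) w = n - 1" using empty_fix[OF dfa w(1)] .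
  thus ?thesis using w n unfolding trans_of_def by simp
qed

lemma Tsg_final:
  assumes dfa: "bf_min_dfa n \<Sigma> \<delta>" and "u \<in> Tsg n \<Sigma> \<delta>"
  shows "u (n-2) = n - 1"
proof -
  have n: "n \<ge> 2" using dfa unfolding bf_min_dfa_def by auto
  obtain w where w: "w \<in> lists \<Sigma>" "w \<noteq> []" "u = trans_of n \<delta> w"
    using assms(2) unfolding Tsg_def by auto
  then obtain a w' where aw: "w = a # w'" by (cases w) auto
  have aS: "a \<in> \<Sigma>" and w'S: "w' \<in> lists \<Sigma>" using w aw by auto
  have "dstar \<delta> (n-2) w = dstar \<delta> (\<delta> (n-2) a) w'" using aw by (simp only: dstar_Cons)
  also have "\<dots> = n - 1" using final_step[OF dfa aS] empty_fix[OF dfa w'S] by simp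
  finally have "dstar \<delta> (n-2) w = n - 1" .
  thus ?thesis using w n unfolding trans_of_def by auto
qed

lemma Tsg_comp:
  assumes dfa: "bf_min_dfa n \<Sigma> \<delta>" and "u \<in> Tsg n \<Sigma> \<delta>" "v \<in> Tsg n \<Sigma> \<delta>"
  shows "v \<circ> u \<in> Tsg n \<Sigma> \<delta>"
proof -
  obtain wu where wu: "wu \<in> lists \<Sigma>" "wu \<noteq> []" "u = trans_of n \<delta> wu"
    using assms(2) unfolding Tsg_def by auto
  obtain wv where wv: "wv \<in> lists \<Sigma>" "wv \<noteq> []" "v = trans_of n \<delta> wv"
    using assms(3) unfolding Tsg_def by auto
  have "v \<circ> u = trans_of n \<delta> (wu @ wv)"
  proof
    fix q show "(v \<circ> u) q = trans_of n \<delta> (wu @ wv) q"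
      using wu wv dstar_lt[OF dfa _ wu(1)] unfolding trans_of_def
      by (auto simp: dstar_append)
  qed
  moreover have "wu @ wv \<in> lists \<Sigma>" "wu @ wv \<noteq> []" using wu wv by auto
  ultimately show ?thesis unfolding Tsg_def by blast
qed

lemma Tsg_pow:
  assumes dfa: "bf_min_dfa n \<Sigma> \<delta>" and u: "u \<in> Tsg n \<Sigma> \<delta>"
  shows "k \<ge> 1 \<Longrightarrow> u^^k \<in> Tsg n \<Sigma> \<delta>"
proof (induction k)
  case 0 thus ?case by simp
next
  case (Suc k)
  show ?case
  proof (cases "k = 0")
    case True thus ?thesis using u by simp
  next
    case False
    hence "u^^k \<in> Tsg n \<Sigma> \<delta>" using Suc by simp
    have "u^^Suc k = u \<circ> u^^k" by simp
    moreover have "u \<circ> u^^k \<in> Tsg n \<Sigma> \<delta>" using Tsg_comp[OF dfa \<open>u^^k \<in> Tsg n \<Sigma> \<delta>\<close> u] .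
    ultimately show ?thesis by (simp only:)
  qed
qed

lemma QM_bounds: "r \<in> QM n \<Longrightarrow> 1 \<le> r \<and> r \<le> n - 3 \<and> n \<ge> 4"
  unfolding QM_def by auto

lemma no_focus:
  assumes dfa: "bf_min_dfa n \<Sigma> \<delta>" and u: "u \<in> Tsg n \<Sigma> \<delta>"
    and col: "colliding n \<Sigma> \<delta> p q" and foc: "focuses n u p q"
  shows False
proof -
  obtain r' where r': "r' \<in> QM n \<union> {n - 2}" "u p = r'" "u q = r'"
    using foc unfolding focuses_def by auto
  obtain v r where v: "v \<in> Tsg n \<Sigma> \<delta>" "r \<in> QM n"
    and vv: "(v 0 = p \<and> v r = q) \<or> (v 0 = q \<and> v r = p)"
    using col unfolding colliding_def by auto
  have n4: "n \<ge> 4" using v(2) QM_bounds by blast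
  have r'lt: "r' < n" "r' \<noteq> n - 1" using r'(1) n4 unfolding QM_def by auto
  have ur: "u (v 0) = r'" "u (v r) = r'" using vv r' by auto
  obtain w where w: "w \<in> lists \<Sigma>" "dstar \<delta> r' w = n - 2"
    using reach_final[OF dfa r'lt] by blast
  have rlt: "r < n" "r \<noteq> 0" using v(2) n4 unfolding QM_def by auto
  obtain x where x: "x \<in> lists \<Sigma>" "dstar \<delta> 0 x = r"
    using dfa rlt unfolding bf_min_dfa_def by blast
  have xne: "x \<noteq> []" using x rlt by (auto simp: dstar_Nil)
  obtain wv where wv: "wv \<in> lists \<Sigma>" "v = trans_of n \<delta> wv"
    using v(1) unfolding Tsg_def by auto
  obtain wu where wu: "wu \<in> lists \<Sigma>" "u = trans_of n \<delta> wu"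
    using u unfolding Tsg_def by auto
  have v0: "v 0 = dstar \<delta> 0 wv" "v r = dstar \<delta> r wv" using wv n4 rlt unfolding trans_of_def by auto
  have v0lt: "v 0 < n" "v r < n" using Tsg_lt[OF dfa v(1)] n4 rlt by auto
  have u0: "u (v 0) = dstar \<delta> (v 0) wu" "u (v r) = dstar \<delta> (v r) wu"
    using wu v0lt unfolding trans_of_def by auto
  let ?z = "wv @ wu @ w"
  have z1: "dstar \<delta> 0 ?z = n - 2" using v0 u0 ur w by (simp add: dstar_append)
  have z2: "dstar \<delta> 0 (x @ ?z) = n - 2" using x v0 u0 ur w by (simp add: dstar_append)
  have L1: "?z \<in> lang n \<Sigma> \<delta>" using z1 wv wu w unfolding lang_def by auto
  have L2: "x @ ?z \<in> lang n \<Sigma> \<delta>" using z2 x wv wu w unfolding lang_def by auto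
  have "strict_suffix ?z (x @ ?z)" using xne by (auto simp: strict_suffix_def suffix_def)
  thus False using L1 L2 dfa unfolding bf_min_dfa_def bifix_free_def by blast
qed

theorem mainTheorem11:
  fixes n :: nat and \<Sigma> :: "'a set" and \<delta> :: "nat \<Rightarrow> 'a \<Rightarrow> nat"
    and t th s :: "nat \<Rightarrow> nat" and C Ch :: "nat set"
  assumes dfa: "bf_min_dfa n \<Sigma> \<delta>"
    and t: "t \<in> Tsg n \<Sigma> \<delta>" and th: "th \<in> Tsg n \<Sigma> \<delta>"
    and s: "s \<in> Wbf6 n"
    and C: "is_orbit n s C \<or> is_tree n s C"
    and Ch: "is_orbit n s Ch \<or> is_tree n s Ch"
    and h1: "\<forall>q\<in>QM n. t q \<noteq> s q \<longrightarrow> q \<in> C"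
    and h2: "\<forall>q\<in>QM n. th q \<noteq> s q \<longrightarrow> q \<in> Ch"
    and h3: "\<exists>i j p q. colliding n \<Sigma> \<delta> p q \<and> p \<in> C \<and> q \<in> C \<and>
                       focuses n ((t ^^ j) \<circ> (s ^^ i)) p q"
  shows "(C \<subseteq> Ch \<or> Ch \<subseteq> C) \<and>
         ((is_orbit n s C \<and> is_orbit n s Ch) \<or>
          (is_tree_to_empty n s C \<and> is_tree_to_empty n s Ch) \<longrightarrow> C = Ch)"
proof -
  obtain i j p q where col: "colliding n \<Sigma> \<delta> p q" and pC: "p \<in> C" and qC: "q \<in> C"
    and foc: "focuses n ((t ^^ j) \<circ> (s ^^ i)) p q" using h3 by blast
  have pQ: "p \<in> QM n" and qQ: "q \<in> QM n" and pq: "p \<noteq> q"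
    using col unfolding colliding_def by auto
  have n4: "n \<ge> 4" using pQ QM_bounds by blast
  have sB: "\<forall>x<n. s x < n \<and> s x \<noteq> 0" "s (n-1) = n - 1" "s (n-2) = n - 1"
    using s unfolding Wbf6_def Bbf_def by auto
  have spow: "(s^^k) x < n \<and> (s^^k) x \<noteq> 0" if "x < n" "x \<noteq> 0" for k x
    using that sB(1) by (induction k) auto
  have nest: "C \<subseteq> Ch \<or> Ch \<subseteq> C"
  proof (cases "C \<inter> Ch = {}")
    case False
    then obtain x where "x \<in> C" "x \<in> Ch" by blast
    thus ?thesis using nested[OF C Ch] by blast
  next
    case True
    have agree: "(th^^k) x = (s^^k) x" if "x \<in> QM n" "x \<notin> Ch" for x k
    proof (induction k)
      case 0 thus ?case by simp
    next
      case (Suc k)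
      let ?y = "(s^^k) x"
      have xb: "x < n" "x \<noteq> 0" using that(1) n4 unfolding QM_def by auto
      have yb: "?y < n" "?y \<noteq> 0" using spow[OF xb] by auto
      have yC: "?y \<notin> Ch" using back_closed[OF Ch xb(1)] that(2) by blast
      have "th ?y = s ?y"
      proof -
        have "?y \<in> QM n \<or> ?y = n - 2 \<or> ?y = n - 1" using yb n4 unfolding QM_def by auto
        thus ?thesis
          using h2 yC Tsg_final[OF dfa th] Tsg_empty[OF dfa th] sB by auto
      qed
      thus ?case using Suc.IH by simp
    qed
    have pCh: "p \<notin> Ch" and qCh: "q \<notin> Ch" using True pC qC by auto
    let ?u = "(t ^^ j) \<circ> (th ^^ i)"
    have "?u p = ((t ^^ j) \<circ> (s ^^ i)) p" "?u q = ((t ^^ j) \<circ> (s ^^ i)) q"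
      using agree[OF pQ pCh] agree[OF qQ qCh] by auto
    hence focu: "focuses n ?u p q" using foc unfolding focuses_def by simp
    show ?thesis
    proof (cases "i = 0 \<and> j = 0")
      case True
      thus ?thesis using foc pq unfolding focuses_def by simp
    next
      case False
      have "?u \<in> Tsg n \<Sigma> \<delta>"
      proof (cases "i = 0")
        case True
        hence "j \<ge> 1" using False by simp
        thus ?thesis using True Tsg_pow[OF dfa t] by simp
      next
        case i: False
        show ?thesis
        proof (cases "j = 0")
          case True thus ?thesis using i Tsg_pow[OF dfa th] by simp
        next
          case False
          thus ?thesis using i Tsg_pow[OF dfa th] Tsg_pow[OF dfa t] Tsg_comp[OF dfa] by simp
        qed
      qed
      with no_focus[OF dfa _ col focu] show ?thesis by blast
    qed
  qed
  have second: "C = Ch" if hyp: "(is_orbit n s C \<and> is_orbit n s Ch) \<or>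
          (is_tree_to_empty n s C \<and> is_tree_to_empty n s Ch)"
    using hyp
  proof
    assume oo: "is_orbit n s C \<and> is_orbit n s Ch"
    obtain q0 where q0: "q0 < n" "Ch = orbit n s q0" using oo unfolding is_orbit_def by auto
    have "q0 \<in> Ch" using q0 unfolding orbit_def by (auto intro: exI[of _ 0])
    hence "p \<in> C \<inter> Ch \<or> q0 \<in> C \<inter> Ch" using nest pC by blast
    then obtain x where "x \<in> C" "x \<in> Ch" by blast
    thus ?thesis using oo unfolding is_orbit_def by (metis orbit_eq)
  next
    assume tt: "is_tree_to_empty n s C \<and> is_tree_to_empty n s Ch"
    obtain r1 where r1: "r1 < n" "r1 \<noteq> n - 1" "s r1 = n - 1" "C = tree n s r1"
      using tt unfolding is_tree_to_empty_def by auto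
    obtain r2 where r2: "r2 < n" "r2 \<noteq> n - 1" "s r2 = n - 1" "Ch = tree n s r2"
      using tt unfolding is_tree_to_empty_def by auto
    have key: "ra = rb" if "tree n s ra \<subseteq> tree n s rb" "ra < n" "s ra = n - 1" "rb \<noteq> n - 1"
      for ra rb
    proof -
      have "ra \<in> tree n s ra" using that(2) unfolding tree_def by (auto intro: exI[of _ 0])
      hence "ra \<in> tree n s rb" using that(1) by blast
      then obtain a where a: "(s^^a) ra = rb" unfolding tree_def by blast
      have fix1: "(s^^m) (n-1) = n - 1" for m using sB(2) by (induction m) auto
      show ?thesis
      proof (cases a)
        case 0 thus ?thesis using a by simp
      next
        case (Suc m)
        have "(s^^a) ra = (s^^m) (s ra)" using Suc by (simp only: funpow_Suc_right o_apply)
        thus ?thesis using a that(3,4) fix1 by simp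
      qed
    qed
    from nest show ?thesis
    proof
      assume "C \<subseteq> Ch" thus ?thesis using key[of r1 r2] r1 r2 by simp
    next
      assume "Ch \<subseteq> C" thus ?thesis using key[of r2 r1] r1 r2 by simp
    qed
  qed
  show ?thesis using nest second by blast
qed

end
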